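(* Let $G$ and $H$ be any graphs, and let $i_G$ be the number of isolated vertices of $G$. Then $$\rho_o(G\circ H)=\begin{cases}\rho_o(G)+i_G\rho_o(H)-i_G, & \text{if } H \text{ has an isolated vertex},\\ \rho(G)+i_G\rho_o(H)-i_G, & \text{otherwise.}\end{cases}$$
   Context: All graphs are finite and simple. A packing of $G$ is a set $P\subseteq V(G)$ with $N[u]\cap N[v]=\emptyset$ for all distinct $u,v\in P$ ($N[\cdot]$ the closed neighborhood); $\rho(G)$ is the maximum size of a packing. An open packing is a set $P$ whose vertices have pairwise disjoint open neighborhoods $N(\cdot)$; $\rho_o(G)$ is the maximum size of an open packing. The lexicographic product $G\circ H$ has vertex set $V(G)\times V(H)$, with $(g,h)$ adjacent to $(g',h')$ iff $gg'\in E(G)$, or ($g=g'$ and $hh'\in E(H)$). *)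

theory Defs
  imports Main
begin

definition graph :: "'a set \<Rightarrow> ('a \<Rightarrow> 'a \<Rightarrow> bool) \<Rightarrow> bool" where
  "graph V E \<longleftrightarrow> finite V \<and> (\<forall>u v. E u v \<longrightarrow> u \<in> V \<and> v \<in> V)
      \<and> (\<forall>u v. E u v \<longrightarrow> E v u) \<and> (\<forall>v. \<not> E v v)"

definition nbhd :: "'a set \<Rightarrow> ('a \<Rightarrow> 'a \<Rightarrow> bool) \<Rightarrow> 'a \<Rightarrow> 'a set" where
  "nbhd V E v = {u \<in> V. E v u}"

definition cnbhd :: "'a set \<Rightarrow> ('a \<Rightarrow> 'a \<Rightarrow> bool) \<Rightarrow> 'a \<Rightarrow> 'a set" where
  "cnbhd V E v = insert v (nbhd V E v)"

definition packing :: "'a set \<Rightarrow> ('a \<Rightarrow> 'a \<Rightarrow> bool) \<Rightarrow> 'a set \<Rightarrow> bool" where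
  "packing V E P \<longleftrightarrow> P \<subseteq> V \<and>
     (\<forall>u\<in>P. \<forall>v\<in>P. u \<noteq> v \<longrightarrow> cnbhd V E u \<inter> cnbhd V E v = {})"

definition open_packing :: "'a set \<Rightarrow> ('a \<Rightarrow> 'a \<Rightarrow> bool) \<Rightarrow> 'a set \<Rightarrow> bool" where
  "open_packing V E P \<longleftrightarrow> P \<subseteq> V \<and>
     (\<forall>u\<in>P. \<forall>v\<in>P. u \<noteq> v \<longrightarrow> nbhd V E u \<inter> nbhd V E v = {})"

definition packing_number :: "'a set \<Rightarrow> ('a \<Rightarrow> 'a \<Rightarrow> bool) \<Rightarrow> nat" where
  "packing_number V E = Max (card ` {P. packing V E P})"

definition open_packing_number :: "'a set \<Rightarrow> ('a \<Rightarrow> 'a \<Rightarrow> bool) \<Rightarrow> nat" where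
  "open_packing_number V E = Max (card ` {P. open_packing V E P})"

definition isolated_vertices :: "'a set \<Rightarrow> ('a \<Rightarrow> 'a \<Rightarrow> bool) \<Rightarrow> 'a set" where
  "isolated_vertices V E = {v \<in> V. nbhd V E v = {}}"

definition lex_adj :: "'a set \<Rightarrow> 'b set \<Rightarrow> ('a \<Rightarrow> 'a \<Rightarrow> bool) \<Rightarrow> ('b \<Rightarrow> 'b \<Rightarrow> bool)
    \<Rightarrow> ('a \<times> 'b) \<Rightarrow> ('a \<times> 'b) \<Rightarrow> bool" where
  "lex_adj V1 V2 E1 E2 x y \<longleftrightarrow> x \<in> V1 \<times> V2 \<and> y \<in> V1 \<times> V2 \<and>
     (E1 (fst x) (fst y) \<or> (fst x = fst y \<and> E2 (snd x) (snd y)))"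

end

theory Submission
  imports Defs
begin

lemma graph_fin: "graph V E \<Longrightarrow> finite V" by (simp add: graph_def)

lemma opn_ge:
  assumes "graph V E" "open_packing V E P"
  shows "card P \<le> open_packing_number V E"
proof -
  have "{P. open_packing V E P} \<subseteq> Pow V" by (auto simp: open_packing_def)
  hence "finite {P. open_packing V E P}" using assms(1) graph_fin finite_Pow_iff finite_subset by metis
  thus ?thesis unfolding open_packing_number_def using assms(2) by auto
qed

lemma opn_ex:
  assumes "graph V E"
  shows "\<exists>P. open_packing V E P \<and> card P = open_packing_number V E"
proof -
  have "{P. open_packing V E P} \<subseteq> Pow V" by (auto simp: open_packing_def)
  hence f: "finite {P. open_packing V E P}" using assms(1) graph_fin finite_Pow_iff finite_subset by metis
  have "open_packing V E {}" by (simp add: open_packing_def)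
  hence "open_packing_number V E \<in> card ` {P. open_packing V E P}"
    unfolding open_packing_number_def using f by (intro Max_in) auto
  thus ?thesis by auto
qed

lemma pn_ge:
  assumes "graph V E" "packing V E P"
  shows "card P \<le> packing_number V E"
proof -
  have "{P. packing V E P} \<subseteq> Pow V" by (auto simp: packing_def)
  hence "finite {P. packing V E P}" using assms(1) graph_fin finite_Pow_iff finite_subset by metis
  thus ?thesis unfolding packing_number_def using assms(2) by auto
qed

lemma pn_ex:
  assumes "graph V E"
  shows "\<exists>P. packing V E P \<and> card P = packing_number V E"
proof -
  have "{P. packing V E P} \<subseteq> Pow V" by (auto simp: packing_def)
  hence f: "finite {P. packing V E P}" using assms(1) graph_fin finite_Pow_iff finite_subset by metis
  have "packing V E {}" by (simp add: packing_def)
  hence "packing_number V E \<in> card ` {P. packing V E P}"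
    unfolding packing_number_def using f by (intro Max_in) auto
  thus ?thesis by auto
qed

lemma mem_nb: "(x,y) \<in> nbhd (VG\<times>VH) (lex_adj VG VH EG EH) (g,h) \<longleftrightarrow>
   g\<in>VG \<and> h\<in>VH \<and> x\<in>VG \<and> y\<in>VH \<and> (EG g x \<or> g = x \<and> EH h y)"
  by (auto simp: nbhd_def lex_adj_def)

lemma iso_iff: "graph V E \<Longrightarrow> g \<in> isolated_vertices V E \<longleftrightarrow> g \<in> V \<and> (\<forall>x. \<not> E g x)"
  unfolding isolated_vertices_def nbhd_def graph_def by blast

lemma upper:
  assumes gG: "graph VG EG" and gH: "graph VH EH" and neH: "VH \<noteq> {}"
    and P: "open_packing (VG \<times> VH) (lex_adj VG VH EG EH) P"
  shows "\<exists>S. S \<inter> isolated_vertices VG EG = {} \<and>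
     card P \<le> card S + card (isolated_vertices VG EG) * open_packing_number VH EH
     \<and> open_packing VG EG (S \<union> isolated_vertices VG EG)
     \<and> ((\<forall>h\<in>VH. \<exists>y. EH h y) \<longrightarrow> packing VG EG (S \<union> isolated_vertices VG EG))"
proof -
  define I where "I = isolated_vertices VG EG"
  define N where "N = nbhd (VG\<times>VH) (lex_adj VG VH EG EH)"
  have PV: "P \<subseteq> VG \<times> VH" using P by (simp add: open_packing_def)
  have disj: "False" if "(g,h)\<in>P" "(g',h')\<in>P" "(g,h)\<noteq>(g',h')" "(x,y)\<in>N (g,h)" "(x,y)\<in>N (g',h')"
    for g h g' h' x y
    using P that unfolding open_packing_def N_def by blast
  have Nm: "(x,y) \<in> N (g,h) \<longleftrightarrow> g\<in>VG \<and> h\<in>VH \<and> x\<in>VG \<and> y\<in>VH \<and> (EG g x \<or> g = x \<and> EH h y)"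
    for x y g h unfolding N_def by (rule mem_nb)
  obtain y0 where y0: "y0 \<in> VH" using neH by auto
  have EGV: "EG u v \<Longrightarrow> u \<in> VG \<and> v \<in> VG" for u v using gG by (auto simp: graph_def)
  have EGs: "EG u v \<Longrightarrow> EG v u" for u v using gG by (auto simp: graph_def)
  have EHV: "EH u v \<Longrightarrow> u \<in> VH \<and> v \<in> VH" for u v using gH by (auto simp: graph_def)
  have Iiff: "g \<in> I \<longleftrightarrow> g \<in> VG \<and> (\<forall>x. \<not> EG g x)" for g unfolding I_def by (rule iso_iff[OF gG])
  have a: "h = h'" if "(g,h)\<in>P" "(g,h')\<in>P" "g \<notin> I" for g h h'
  proof (rule ccontr)
    assume ne: "h \<noteq> h'"
    have "g \<in> VG" "h \<in> VH" "h' \<in> VH" using PV that by auto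
    then obtain x where "EG g x" using Iiff \<open>g \<notin> I\<close> by auto
    hence "(x,y0) \<in> N (g,h)" "(x,y0) \<in> N (g,h')" using Nm EGV y0 \<open>h\<in>VH\<close> \<open>h'\<in>VH\<close> by auto
    thus False using disj[OF that(1,2)] ne by auto
  qed
  have b: "False" if "(g,h)\<in>P" "(g',h')\<in>P" "g \<noteq> g'" "EG g x" "EG g' x" for g h g' h' x
  proof -
    have "(x,y0) \<in> N (g,h)" "(x,y0) \<in> N (g',h')" using Nm EGV y0 PV that by auto
    thus False using disj[OF that(1,2)] that(3) by auto
  qed
  have c: "False" if c1: "(g,h)\<in>P" "(g',h')\<in>P" "g \<noteq> g'" "EG g g'" "\<forall>h\<in>VH. \<exists>y. EH h y" for g h g' h'
  proof -
    have "h' \<in> VH" using PV c1 by auto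
    then obtain y where y: "EH h' y" using c1(5) by auto
    have "(g',y) \<in> N (g,h)" "(g',y) \<in> N (g',h')" using Nm EGV EHV y PV c1 by auto
    thus False using disj[OF c1(1,2)] c1(3) by auto
  qed
  define PN where "PN = {p\<in>P. fst p \<notin> I}"
  define F where "F g = {h. (g,h)\<in>P}" for g
  have PI: "{p\<in>P. fst p \<in> I} = (SIGMA g:I. F g)" unfolding F_def by auto
  have finI: "finite I" unfolding I_def using gG by (auto simp: isolated_vertices_def graph_def)
  have finF: "finite (F g)" for g
  proof -
    have "F g \<subseteq> VH" using PV unfolding F_def by auto
    thus ?thesis using gH graph_fin finite_subset by metis
  qed
  have Fop: "open_packing VH EH (F g)" if "g \<in> I" for g
    unfolding open_packing_def
  proof (intro conjI ballI impI)
    show "F g \<subseteq> VH" using PV unfolding F_def by auto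
    fix h h' assume hh: "h \<in> F g" "h' \<in> F g" "h \<noteq> h'"
    show "nbhd VH EH h \<inter> nbhd VH EH h' = {}"
    proof (rule ccontr)
      assume "nbhd VH EH h \<inter> nbhd VH EH h' \<noteq> {}"
      then obtain y where "EH h y" "EH h' y" "y \<in> VH" by (auto simp: nbhd_def)
      moreover have "g \<in> VG" using that Iiff by auto
      ultimately have "(g,y) \<in> N (g,h)" "(g,y) \<in> N (g,h')" using Nm EHV by auto
      moreover have "(g,h)\<in>P" "(g,h')\<in>P" using hh unfolding F_def by auto
      ultimately show False using disj[of g h g h' g y] hh(3) by blast
    qed
  qed
  have cardPI: "card {p\<in>P. fst p \<in> I} \<le> card I * open_packing_number VH EH"
  proof -
    have "card {p\<in>P. fst p \<in> I} = (\<Sum>g\<in>I. card (F g))" unfolding PI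
      using finI finF by (simp add: card_SigmaI)
    also have "\<dots> \<le> (\<Sum>g\<in>I. open_packing_number VH EH)"
      by (intro sum_mono opn_ge[OF gH] Fop)
    finally show ?thesis by simp
  qed
  have finP: "finite P" using PV gG gH graph_fin finite_subset finite_SigmaI by metis
  have cardP: "card P = card PN + card {p\<in>P. fst p \<in> I}"
  proof -
    have "P = PN \<union> {p\<in>P. fst p \<in> I}" unfolding PN_def by auto
    moreover have "PN \<inter> {p\<in>P. fst p \<in> I} = {}" unfolding PN_def by auto
    ultimately show ?thesis using finP card_Un_disjoint[of PN "{p\<in>P. fst p \<in> I}"]
      by (metis (no_types, lifting) finite_Un)
  qed
  have inj: "inj_on fst PN"
    unfolding inj_on_def PN_def using a by auto
  define S where "S = fst ` PN"
  have cardS: "card S = card PN" unfolding S_def using inj by (simp add: card_image)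
  have SI: "S \<inter> I = {}" unfolding S_def PN_def by auto
  have SV: "S \<subseteq> VG" unfolding S_def PN_def using PV by auto
  have Smem: "\<exists>h. (u,h)\<in>P" if "u \<in> S" for u using that unfolding S_def PN_def by force
  have op: "open_packing VG EG (S \<union> I)"
    unfolding open_packing_def
  proof (intro conjI ballI impI)
    show "S \<union> I \<subseteq> VG" using SV Iiff by auto
    fix u v assume uv: "u \<in> S \<union> I" "v \<in> S \<union> I" "u \<noteq> v"
    show "nbhd VG EG u \<inter> nbhd VG EG v = {}"
    proof (rule ccontr)
      assume "nbhd VG EG u \<inter> nbhd VG EG v \<noteq> {}"
      then obtain x where x: "EG u x" "EG v x" by (auto simp: nbhd_def)
      hence "u \<notin> I" "v \<notin> I" using Iiff by auto
      hence "u \<in> S" "v \<in> S" using uv by auto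
      then obtain h h' where "(u,h)\<in>P" "(v,h')\<in>P" using Smem by blast
      thus False using b x uv by blast
    qed
  qed
  have pk: "packing VG EG (S \<union> I)" if nh: "\<forall>h\<in>VH. \<exists>y. EH h y"
    unfolding packing_def
  proof (intro conjI ballI impI)
    show "S \<union> I \<subseteq> VG" using SV Iiff by auto
    fix u v assume uv: "u \<in> S \<union> I" "v \<in> S \<union> I" "u \<noteq> v"
    show "cnbhd VG EG u \<inter> cnbhd VG EG v = {}"
    proof (rule ccontr)
      assume "cnbhd VG EG u \<inter> cnbhd VG EG v \<noteq> {}"
      then obtain x where x: "x = u \<or> EG u x" "x = v \<or> EG v x" by (auto simp: cnbhd_def nbhd_def)
      hence "EG u v \<or> EG v u \<or> (EG u x \<and> EG v x)" using uv(3) by auto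
      hence "u \<notin> I" "v \<notin> I" using Iiff EGs by blast+
      hence "u \<in> S" "v \<in> S" using uv by auto
      then obtain h h' where hh: "(u,h)\<in>P" "(v,h')\<in>P" using Smem by blast
      show False using b[OF hh] c[OF hh _ _ nh] c[OF hh(2,1) _ _ nh] x uv(3) by metis
    qed
  qed
  show ?thesis unfolding I_def[symmetric]
    using SI op pk cardP cardS cardPI by (intro exI[of _ S]) auto
qed

lemma lower:
  assumes gG: "graph VG EG" and gH: "graph VH EH"
    and QV: "Q \<subseteq> VG" and QI: "Q \<inter> isolated_vertices VG EG = {}" and h0: "h0 \<in> VH"
    and R: "open_packing VH EH R"
    and cond: "\<forall>u\<in>Q. \<forall>v\<in>Q. u \<noteq> v \<longrightarrow> nbhd VG EG u \<inter> nbhd VG EG v = {} \<and>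
                 (nbhd VH EH h0 = {} \<or> \<not> EG u v)"
  shows "open_packing (VG \<times> VH) (lex_adj VG VH EG EH) (Q \<times> {h0} \<union> isolated_vertices VG EG \<times> R)
     \<and> card (Q \<times> {h0} \<union> isolated_vertices VG EG \<times> R) = card Q + card (isolated_vertices VG EG) * card R"
proof -
  define I where "I = isolated_vertices VG EG"
  define N where "N = nbhd (VG\<times>VH) (lex_adj VG VH EG EH)"
  have Nm: "(x,y) \<in> N (g,h) \<longleftrightarrow> g\<in>VG \<and> h\<in>VH \<and> x\<in>VG \<and> y\<in>VH \<and> (EG g x \<or> g = x \<and> EH h y)"
    for x y g h unfolding N_def by (rule mem_nb)
  have EGs: "EG u v \<Longrightarrow> EG v u" for u v using gG by (auto simp: graph_def)
  have EGV: "EG u v \<Longrightarrow> u \<in> VG \<and> v \<in> VG" for u v using gG by (auto simp: graph_def)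
  have EHV: "EH u v \<Longrightarrow> u \<in> VH \<and> v \<in> VH" for u v using gH by (auto simp: graph_def)
  have Iiff: "g \<in> I \<longleftrightarrow> g \<in> VG \<and> (\<forall>x. \<not> EG g x)" for g unfolding I_def by (rule iso_iff[OF gG])
  have RV: "R \<subseteq> VH" using R by (simp add: open_packing_def)
  have Rd: "\<not> (EH h y \<and> EH h' y)" if "h \<in> R" "h' \<in> R" "h \<noteq> h'" for h h' y
    using R that EHV unfolding open_packing_def nbhd_def by blast
  have Qd: "\<not> (EG u x \<and> EG v x)" if "u \<in> Q" "v \<in> Q" "u \<noteq> v" for u v x
    using cond that EGV unfolding nbhd_def by blast
  have Qa: "\<not> (EG u v \<and> EH h0 y)" if "u \<in> Q" "v \<in> Q" "u \<noteq> v" for u v y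
    using cond that EHV h0 unfolding nbhd_def by blast
  have QnI: "u \<in> Q \<Longrightarrow> u \<notin> I" for u using QI unfolding I_def by auto
  have key: False if pq: "p \<in> Q \<times> {h0} \<union> I \<times> R" "q \<in> Q \<times> {h0} \<union> I \<times> R" "p \<noteq> q"
     "(x,y) \<in> N p" "(x,y) \<in> N q" for p q x y
  proof -
    obtain g h g' h' where pe: "p = (g,h)" and qe: "q = (g',h')" by (cases p, cases q) auto
    have m1: "EG g x \<or> g = x \<and> EH h y" and m2: "EG g' x \<or> g' = x \<and> EH h' y"
      using pq(4,5) Nm pe qe by auto
    consider "g \<in> Q" "h = h0" "g' \<in> Q" "h' = h0" | "g \<in> Q" "h = h0" "g' \<in> I" "h' \<in> R"
      | "g \<in> I" "h \<in> R" "g' \<in> Q" "h' = h0" | "g \<in> I" "h \<in> R" "g' \<in> I" "h' \<in> R"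
      using pq(1,2) pe qe by auto
    thus False
    proof cases
      case 1 thus ?thesis using m1 m2 Qd Qa pq(3) pe qe by metis
    next
      case 2 thus ?thesis using m1 m2 Iiff EGs QnI by metis
    next
      case 3 thus ?thesis using m1 m2 Iiff EGs QnI by metis
    next
      case 4 thus ?thesis using m1 m2 Iiff Rd pq(3) pe qe by metis
    qed
  qed
  have op: "open_packing (VG \<times> VH) (lex_adj VG VH EG EH) (Q \<times> {h0} \<union> I \<times> R)"
    unfolding open_packing_def
  proof (intro conjI ballI impI)
    show "Q \<times> {h0} \<union> I \<times> R \<subseteq> VG \<times> VH" using QV h0 RV Iiff by auto
    fix p q assume "p \<in> Q \<times> {h0} \<union> I \<times> R" "q \<in> Q \<times> {h0} \<union> I \<times> R" "p \<noteq> q"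
    thus "nbhd (VG \<times> VH) (lex_adj VG VH EG EH) p \<inter> nbhd (VG \<times> VH) (lex_adj VG VH EG EH) q = {}"
      using key unfolding N_def by fast
  qed
  have finQ: "finite Q" using QV gG graph_fin finite_subset by metis
  have finR: "finite R" using RV gH graph_fin finite_subset by metis
  have finI: "finite I" unfolding I_def using gG by (auto simp: isolated_vertices_def graph_def)
  have "card (Q \<times> {h0} \<union> I \<times> R) = card (Q \<times> {h0}) + card (I \<times> R)"
    by (rule card_Un_disjoint) (use finQ finR finI QnI in auto)
  also have "\<dots> = card Q + card I * card R" by (simp add: card_cartesian_product)
  finally show ?thesis using op unfolding I_def by simp
qed


theorem mainTheorem9:
  fixes VG :: "'a set" and EG :: "'a \<Rightarrow> 'a \<Rightarrow> bool"
    and VH :: "'b set" and EH :: "'b \<Rightarrow> 'b \<Rightarrow> bool"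
  assumes "graph VG EG" and "VG \<noteq> {}"
    and "graph VH EH" and "VH \<noteq> {}"
  shows "int (open_packing_number (VG \<times> VH) (lex_adj VG VH EG EH)) =
    (if isolated_vertices VH EH \<noteq> {}
     then int (open_packing_number VG EG)
          + int (card (isolated_vertices VG EG)) * int (open_packing_number VH EH)
          - int (card (isolated_vertices VG EG))
     else int (packing_number VG EG)
          + int (card (isolated_vertices VG EG)) * int (open_packing_number VH EH)
          - int (card (isolated_vertices VG EG)))"
proof -
  note gG = assms(1) and gH = assms(3) and neH = assms(4)
  define I where "I = isolated_vertices VG EG"
  define a where "a = open_packing_number (VG \<times> VH) (lex_adj VG VH EG EH)"
  define r where "r = open_packing_number VH EH"
  have finI: "finite I" unfolding I_def using gG by (auto simp: isolated_vertices_def graph_def)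
  have IV: "I \<subseteq> VG" unfolding I_def by (auto simp: isolated_vertices_def)
  have gP: "graph (VG \<times> VH) (lex_adj VG VH EG EH)"
    using gG gH unfolding graph_def lex_adj_def by auto
  obtain P where P: "open_packing (VG \<times> VH) (lex_adj VG VH EG EH) P" "card P = a"
    using opn_ex[OF gP] unfolding a_def by blast
  obtain S where S: "S \<inter> I = {}" "card P \<le> card S + card I * r"
     "open_packing VG EG (S \<union> I)" "(\<forall>h\<in>VH. \<exists>y. EH h y) \<longrightarrow> packing VG EG (S \<union> I)"
    using upper[OF gG gH neH P(1)] unfolding I_def r_def by blast
  have finS: "finite S" using S(3) gG graph_fin finite_subset unfolding open_packing_def by (metis Un_subset_iff)
  have cSI: "card (S \<union> I) = card S + card I" using finS finI S(1) card_Un_disjoint by blast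
  obtain R where R: "open_packing VH EH R" "card R = r" using opn_ex[OF gH] unfolding r_def by blast
  have Qc: "card Q \<le> card (Q - I) + card I" if "finite Q" for Q
  proof -
    have "card Q \<le> card ((Q - I) \<union> I)" by (rule card_mono) (use finI that in auto)
    also have "\<dots> \<le> card (Q - I) + card I" by (rule card_Un_le)
    finally show ?thesis .
  qed
  have main: "a + card I = X + card I * r" if
     X1: "card (S \<union> I) \<le> X"
     and X2: "\<exists>Q. Q \<subseteq> VG \<and> Q \<inter> I = {} \<and> X \<le> card Q + card I \<and> open_packing (VG \<times> VH) (lex_adj VG VH EG EH)
         (Q \<times> {h0} \<union> I \<times> R) \<and> card (Q \<times> {h0} \<union> I \<times> R) = card Q + card I * card R" for X h0
  proof -
    have "a + card I \<le> X + card I * r" using S(2) P(2) cSI X1 by linarith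
    moreover obtain Q where Q: "X \<le> card Q + card I" "open_packing (VG \<times> VH) (lex_adj VG VH EG EH)
         (Q \<times> {h0} \<union> I \<times> R)" "card (Q \<times> {h0} \<union> I \<times> R) = card Q + card I * card R"
      using X2 by blast
    have "card Q + card I * r \<le> a" using opn_ge[OF gP Q(2)] Q(3) R(2) unfolding a_def by simp
    ultimately show ?thesis using Q(1) by linarith
  qed
  show ?thesis
  proof (cases "isolated_vertices VH EH \<noteq> {}")
    case True
    then obtain h0 where h0: "h0 \<in> isolated_vertices VH EH" by blast
    have h0V: "h0 \<in> VH" and h0n: "nbhd VH EH h0 = {}" using h0 by (auto simp: isolated_vertices_def)
    obtain Q where Q: "open_packing VG EG Q" "card Q = open_packing_number VG EG" using opn_ex[OF gG] by blast
    have finQ: "finite Q" using Q(1) gG graph_fin finite_subset unfolding open_packing_def by metis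
    have "a + card I = open_packing_number VG EG + card I * r"
    proof (rule main[of _ h0])
      show "card (S \<union> I) \<le> open_packing_number VG EG" using opn_ge[OF gG S(3)] .
      have "Q - I \<subseteq> VG" using Q(1) by (auto simp: open_packing_def)
      moreover have "(Q - I) \<inter> isolated_vertices VG EG = {}" unfolding I_def by auto
      moreover have "\<forall>u\<in>Q - I. \<forall>v\<in>Q - I. u \<noteq> v \<longrightarrow> nbhd VG EG u \<inter> nbhd VG EG v = {} \<and>
                 (nbhd VH EH h0 = {} \<or> \<not> EG u v)" using Q(1) h0n by (auto simp: open_packing_def)
      ultimately have L: "open_packing (VG \<times> VH) (lex_adj VG VH EG EH) ((Q - I) \<times> {h0} \<union> I \<times> R)
     \<and> card ((Q - I) \<times> {h0} \<union> I \<times> R) = card (Q - I) + card I * card R"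
        using lower[OF gG gH _ _ h0V R(1), of "Q - I"] unfolding I_def by blast
      show "\<exists>Q. Q \<subseteq> VG \<and> Q \<inter> I = {} \<and> open_packing_number VG EG \<le> card Q + card I \<and> open_packing (VG \<times> VH) (lex_adj VG VH EG EH)
         (Q \<times> {h0} \<union> I \<times> R) \<and> card (Q \<times> {h0} \<union> I \<times> R) = card Q + card I * card R"
        using L Qc[OF finQ] Q(2) \<open>Q - I \<subseteq> VG\<close> by (intro exI[of _ "Q - I"]) auto
    qed
    hence "int a + int (card I) = int (open_packing_number VG EG) + int (card I) * int r" by (metis of_nat_add of_nat_mult)
    thus ?thesis using True unfolding a_def I_def r_def by simp
  next
    case False
    hence nh: "\<forall>h\<in>VH. \<exists>y. EH h y" by (auto simp: isolated_vertices_def nbhd_def)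
    obtain h0 where h0V: "h0 \<in> VH" using neH by blast
    obtain Q where Q: "packing VG EG Q" "card Q = packing_number VG EG" using pn_ex[OF gG] by blast
    have finQ: "finite Q" using Q(1) gG graph_fin finite_subset unfolding packing_def by metis
    have "a + card I = packing_number VG EG + card I * r"
    proof (rule main[of _ h0])
      show "card (S \<union> I) \<le> packing_number VG EG" using pn_ge[OF gG] S(4) nh by blast
      have "Q - I \<subseteq> VG" using Q(1) by (auto simp: packing_def)
      moreover have "(Q - I) \<inter> isolated_vertices VG EG = {}" unfolding I_def by auto
      moreover have "\<forall>u\<in>Q - I. \<forall>v\<in>Q - I. u \<noteq> v \<longrightarrow> nbhd VG EG u \<inter> nbhd VG EG v = {} \<and>
                 (nbhd VH EH h0 = {} \<or> \<not> EG u v)"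
      proof (intro ballI impI)
        fix u v assume uv: "u \<in> Q - I" "v \<in> Q - I" "u \<noteq> v"
        hence d: "cnbhd VG EG u \<inter> cnbhd VG EG v = {}" "v \<in> VG" using Q(1) by (auto simp: packing_def)
        thus "nbhd VG EG u \<inter> nbhd VG EG v = {} \<and> (nbhd VH EH h0 = {} \<or> \<not> EG u v)"
          by (auto simp: cnbhd_def nbhd_def)
      qed
      ultimately have L: "open_packing (VG \<times> VH) (lex_adj VG VH EG EH) ((Q - I) \<times> {h0} \<union> I \<times> R)
     \<and> card ((Q - I) \<times> {h0} \<union> I \<times> R) = card (Q - I) + card I * card R"
        using lower[OF gG gH _ _ h0V R(1), of "Q - I"] unfolding I_def by blast
      show "\<exists>Q. Q \<subseteq> VG \<and> Q \<inter> I = {} \<and> packing_number VG EG \<le> card Q + card I \<and> open_packing (VG \<times> VH) (lex_adj VG VH EG EH)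
         (Q \<times> {h0} \<union> I \<times> R) \<and> card (Q \<times> {h0} \<union> I \<times> R) = card Q + card I * card R"
        using L Qc[OF finQ] Q(2) \<open>Q - I \<subseteq> VG\<close> by (intro exI[of _ "Q - I"]) auto
    qed
    hence "int a + int (card I) = int (packing_number VG EG) + int (card I) * int r" by (metis of_nat_add of_nat_mult)
    thus ?thesis using False unfolding a_def I_def r_def by simp
  qed
qed

end
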